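(* Let $(G,\mathcal F_\bullet G,\mathfrak R)$ be a filtered Rota–Baxter group such that $\mathsf{gr}\,G$ has a structure of a $\mathbb Q$-Lie algebra (i.e. each $\mathsf{gr}_nG$ is a uniquely divisible abelian group, with $\mathbb Q$-action determined by $m\cdot\bar x=\overline{x^m}$). Then the map $\mathsf{gr}\,\mathfrak R:\mathsf{gr}\,G\to\mathsf{gr}\,G$ is $\mathbb Q$-linear and $(\mathsf{gr}\,G,\mathsf{gr}\,\mathfrak R)$ is a graded Rota–Baxter $\mathbb Q$-Lie algebra.
   Context: For a group $G$ write $(x,y)=xyx^{-1}y^{-1}$. A filtered group is a group with subgroups $G=\mathcal F_1G\supset\mathcal F_2G\supset\cdots$ such that the subgroup generated by commutators $(x,y)$, $x\in\mathcal F_nG$, $y\in\mathcal F_mG$, lies in $\mathcal F_{n+m}G$. Then $\mathsf{gr}_nG=\mathcal F_nG/\mathcal F_{n+1}G$ is abelian, written additively ($\bar x+\bar y=\overline{xy}$), and $\mathsf{gr}\,G=\bigoplus_{n\ge1}\mathsf{gr}_nG$ is a graded Lie ring with bracket determined by $[\bar x,\bar y]=\overline{(x,y)}\in\mathsf{gr}_{n+m}G$ for $x\in\mathcal F_nG,y\in\mathcal F_mG$. A filtered Rota–Baxter group is a filtered group with a map $\mathfrak R$ satisfying $\mathfrak R(g)\mathfrak R(h)=\mathfrak R(g\mathfrak R(g)h\mathfrak R(g)^{-1})$ and $\mathfrak R(\mathcal F_nG)\subset\mathcal F_nG$. $\mathsf{gr}\,\mathfrak R$ is the additive map acting on $\mathsf{gr}_nG$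 by $\bar x\mapsto\overline{\mathfrak R(x)}$ (well defined). A graded Rota–Baxter ($\mathbb Q$-)Lie algebra is a graded Lie algebra with a linear map $P$ preserving each graded component and satisfying $[P(a),P(b)]=P([P(a),b]+[a,P(b)]+[a,b])$. *)

theory Defs
  imports "HOL-Algebra.Algebra"
begin

definition gcomm :: "('a, 'b) monoid_scheme \<Rightarrow> 'a \<Rightarrow> 'a \<Rightarrow> 'a" where
  "gcomm G x y = x \<otimes>\<^bsub>G\<^esub> y \<otimes>\<^bsub>G\<^esub> inv\<^bsub>G\<^esub> x \<otimes>\<^bsub>G\<^esub> inv\<^bsub>G\<^esub> y"

definition filtered_group :: "('a, 'b) monoid_scheme \<Rightarrow> (nat \<Rightarrow> 'a set) \<Rightarrow> bool" where
  "filtered_group G F \<longleftrightarrow> group G \<and> F 1 = carrier G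
     \<and> (\<forall>n\<ge>1. subgroup (F n) G \<and> F (Suc n) \<subseteq> F n)
     \<and> (\<forall>n\<ge>1. \<forall>m\<ge>1. generate G {gcomm G x y | x y. x \<in> F n \<and> y \<in> F m} \<subseteq> F (n + m))"

definition rota_baxter_group :: "('a, 'b) monoid_scheme \<Rightarrow> ('a \<Rightarrow> 'a) \<Rightarrow> bool" where
  "rota_baxter_group G R \<longleftrightarrow> (\<forall>g\<in>carrier G. \<forall>h\<in>carrier G.
     R g \<otimes>\<^bsub>G\<^esub> R h = R (g \<otimes>\<^bsub>G\<^esub> R g \<otimes>\<^bsub>G\<^esub> h \<otimes>\<^bsub>G\<^esub> inv\<^bsub>G\<^esub> (R g)))"

definition filtered_rota_baxter_group ::
  "('a, 'b) monoid_scheme \<Rightarrow> (nat \<Rightarrow> 'a set) \<Rightarrow> ('a \<Rightarrow> 'a) \<Rightarrow> bool" where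
  "filtered_rota_baxter_group G F R \<longleftrightarrow> filtered_group G F \<and> rota_baxter_group G R
     \<and> (\<forall>n\<ge>1. R ` F n \<subseteq> F n)"

text \<open>The graded piece gr_n G = F_n G / F_{n+1} G (as a HOL-Algebra quotient group);
  its group operation (set product of cosets) is the addition of gr_n G.\<close>
definition grp :: "('a, 'b) monoid_scheme \<Rightarrow> (nat \<Rightarrow> 'a set) \<Rightarrow> nat \<Rightarrow> 'a set monoid" where
  "grp G F n = (G\<lparr>carrier := F n\<rparr>) Mod F (Suc n)"

definition grR :: "('a, 'b) monoid_scheme \<Rightarrow> (nat \<Rightarrow> 'a set) \<Rightarrow> ('a \<Rightarrow> 'a) \<Rightarrow> nat \<Rightarrow> 'a set \<Rightarrow> 'a set" where
  "grR G F R n A = r_coset G (F (Suc n)) (R (SOME x. x \<in> A))"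

definition grbr :: "('a, 'b) monoid_scheme \<Rightarrow> (nat \<Rightarrow> 'a set) \<Rightarrow> nat \<Rightarrow> nat \<Rightarrow> 'a set \<Rightarrow> 'a set \<Rightarrow> 'a set" where
  "grbr G F n m A B = r_coset G (F (Suc (n + m))) (gcomm G (SOME x. x \<in> A) (SOME y. y \<in> B))"

definition gr_uniquely_divisible :: "('a, 'b) monoid_scheme \<Rightarrow> (nat \<Rightarrow> 'a set) \<Rightarrow> bool" where
  "gr_uniquely_divisible G F \<longleftrightarrow> (\<forall>n\<ge>1. \<forall>A\<in>carrier (grp G F n). \<forall>k::nat. k > 0 \<longrightarrow>
     (\<exists>!B. B \<in> carrier (grp G F n) \<and> B [^]\<^bsub>grp G F n\<^esub> k = A))"

definition qact :: "('a, 'b) monoid_scheme \<Rightarrow> (nat \<Rightarrow> 'a set) \<Rightarrow> nat \<Rightarrow> rat \<Rightarrow> 'a set \<Rightarrow> 'a set" where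
  "qact G F n q A = (THE B. B \<in> carrier (grp G F n) \<and>
      B [^]\<^bsub>grp G F n\<^esub> (snd (quotient_of q)) = A [^]\<^bsub>grp G F n\<^esub> (fst (quotient_of q)))"

text \<open>The direct sum gr G = \<Oplus>_{n\<ge>1} gr_n G, as finitely supported families
  (the index 0 is unused and fixed to the dummy value F 1).\<close>
definition gr_carrier :: "('a, 'b) monoid_scheme \<Rightarrow> (nat \<Rightarrow> 'a set) \<Rightarrow> (nat \<Rightarrow> 'a set) set" where
  "gr_carrier G F = {f. f 0 = F 1 \<and> (\<forall>n\<ge>1. f n \<in> carrier (grp G F n))
      \<and> finite {n. f n \<noteq> \<one>\<^bsub>grp G F n\<^esub>}}"

definition gr_add :: "('a, 'b) monoid_scheme \<Rightarrow> (nat \<Rightarrow> 'a set) \<Rightarrow> (nat \<Rightarrow> 'a set) \<Rightarrow> (nat \<Rightarrow> 'a set) \<Rightarrow> nat \<Rightarrow> 'a set" where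
  "gr_add G F f g = (\<lambda>n. if n = 0 then F 1 else f n \<otimes>\<^bsub>grp G F n\<^esub> g n)"

definition gr_smult :: "('a, 'b) monoid_scheme \<Rightarrow> (nat \<Rightarrow> 'a set) \<Rightarrow> rat \<Rightarrow> (nat \<Rightarrow> 'a set) \<Rightarrow> nat \<Rightarrow> 'a set" where
  "gr_smult G F q f = (\<lambda>n. if n = 0 then F 1 else qact G F n q (f n))"

definition gr_bracket :: "('a, 'b) monoid_scheme \<Rightarrow> (nat \<Rightarrow> 'a set) \<Rightarrow> (nat \<Rightarrow> 'a set) \<Rightarrow> (nat \<Rightarrow> 'a set) \<Rightarrow> nat \<Rightarrow> 'a set" where
  "gr_bracket G F f g = (\<lambda>k. if k = 0 then F 1 else
      finprod (grp G F k) (\<lambda>n. grbr G F n (k - n) (f n) (g (k - n))) {1..<k})"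

definition gr_map :: "('a, 'b) monoid_scheme \<Rightarrow> (nat \<Rightarrow> 'a set) \<Rightarrow> ('a \<Rightarrow> 'a) \<Rightarrow> (nat \<Rightarrow> 'a set) \<Rightarrow> nat \<Rightarrow> 'a set" where
  "gr_map G F R f = (\<lambda>n. if n = 0 then F 1 else grR G F R n (f n))"

end

theory Submission
  imports Defs
begin

lemma hom_finprod_gen:
  fixes H (structure)
  assumes cg: "comm_group H" and h: "h \<in> hom H H" and fin: "finite I" and f: "f \<in> I \<rightarrow> carrier H"
  shows "h (finprod H f I) = finprod H (\<lambda>i. h (f i)) I"
proof -
  interpret comm_group H by (rule cg)
  interpret gh: group_hom H H h using h is_group by (simp add: group_hom_def group_hom_axioms_def)
  show ?thesis using fin f
  proof (induction I rule: finite_induct)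
    case empty thus ?case by simp
  next
    case (insert i I)
    hence fi: "f i \<in> carrier H" and fI: "f \<in> I \<rightarrow> carrier H" by auto
    have hfI: "(\<lambda>i. h (f i)) \<in> I \<rightarrow> carrier H" using fI by (auto intro!: gh.hom_closed)
    have e1: "finprod H f (insert i I) = f i \<otimes> finprod H f I" using finprod_insert insert.hyps fi fI by simp
    have e2: "finprod H (\<lambda>i. h (f i)) (insert i I) = h (f i) \<otimes> finprod H (\<lambda>i. h (f i)) I"
      using finprod_insert insert.hyps fi hfI gh.hom_closed by simp
    show ?case using e1 e2 insert.IH[OF fI] fi fI finprod_closed[OF fI] gh.hom_mult by simp
  qed
qed

locale frb =
  fixes G :: "('a, 'b) monoid_scheme" (structure) and F :: "nat \<Rightarrow> 'a set" and R :: "'a \<Rightarrow> 'a"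
  assumes frb: "filtered_rota_baxter_group G F R"
begin

lemma grpG: "group G" using frb unfolding filtered_rota_baxter_group_def filtered_group_def by blast

sublocale group G by (rule grpG)

lemma F1: "F 1 = carrier G"
  using frb unfolding filtered_rota_baxter_group_def filtered_group_def by blast

lemma Fsub: "n \<ge> 1 \<Longrightarrow> subgroup (F n) G"
  using frb unfolding filtered_rota_baxter_group_def filtered_group_def by blast

lemma Fdec: "n \<ge> 1 \<Longrightarrow> F (Suc n) \<subseteq> F n"
  using frb unfolding filtered_rota_baxter_group_def filtered_group_def by blast

lemma Fmono: assumes "1 \<le> n" "n \<le> m" shows "F m \<subseteq> F n"
  using assms(2)
proof (induction m rule: dec_induct)
  case base then show ?case by simp
next
  case (step m) then show ?case using Fdec[of m] assms(1) by auto
qed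

lemma Fcar: "n \<ge> 1 \<Longrightarrow> x \<in> F n \<Longrightarrow> x \<in> carrier G"
  by (rule subgroup.mem_carrier[OF Fsub])

lemma Fsubset: "n \<ge> 1 \<Longrightarrow> F n \<subseteq> carrier G"
  by (rule subgroup.subset[OF Fsub])

lemma Fcomm: "n \<ge> 1 \<Longrightarrow> m \<ge> 1 \<Longrightarrow> x \<in> F n \<Longrightarrow> y \<in> F m \<Longrightarrow> gcomm G x y \<in> F (n + m)"
proof -
  assume a: "n \<ge> 1" "m \<ge> 1" "x \<in> F n" "y \<in> F m"
  have "\<forall>n\<ge>1. \<forall>m\<ge>1. generate G {gcomm G x y | x y. x \<in> F n \<and> y \<in> F m} \<subseteq> F (n + m)"
    using frb unfolding filtered_rota_baxter_group_def filtered_group_def by (elim conjE)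
  hence "generate G {gcomm G x y | x y. x \<in> F n \<and> y \<in> F m} \<subseteq> F (n + m)"
    using a(1,2) by simp
  moreover have "gcomm G x y \<in> generate G {gcomm G x y | x y. x \<in> F n \<and> y \<in> F m}"
    using a(3,4) by (intro generate.incl) auto
  ultimately show ?thesis by (rule subsetD)
qed

lemma Rclosed: assumes "n \<ge> 1" "x \<in> F n" shows "R x \<in> F n"
proof -
  have "\<forall>n\<ge>1. R ` F n \<subseteq> F n" using frb unfolding filtered_rota_baxter_group_def by (elim conjE)
  hence "R ` F n \<subseteq> F n" using assms(1) by simp
  thus ?thesis using assms(2) by (simp add: image_subset_iff)
qed

lemma Rcar: "x \<in> carrier G \<Longrightarrow> R x \<in> carrier G"
  using Rclosed[of 1 x] unfolding F1 by simp

lemma RB: assumes "g \<in> carrier G" "h \<in> carrier G" shows "R g \<otimes> R h = R (g \<otimes> R g \<otimes> h \<otimes> inv (R g))"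
proof -
  have "rota_baxter_group G R" using frb unfolding filtered_rota_baxter_group_def by (elim conjE)
  thus ?thesis using assms unfolding rota_baxter_group_def by blast
qed

lemma c1: "x \<in> carrier G \<Longrightarrow> y \<in> carrier G \<Longrightarrow> x \<otimes> (inv x \<otimes> y) = y"
  by (simp add: m_assoc[symmetric])
lemma c2: "x \<in> carrier G \<Longrightarrow> y \<in> carrier G \<Longrightarrow> inv x \<otimes> (x \<otimes> y) = y"
  by (simp add: m_assoc[symmetric])

lemmas gs = m_assoc inv_mult_group c1 c2 r_inv l_inv r_one l_one inv_inv gcomm_def Rcar

lemma Fin: "n \<ge> 1 \<Longrightarrow> x \<in> F n \<Longrightarrow> y \<in> F n \<Longrightarrow> x \<otimes> y \<in> F n"
  by (rule subgroup.m_closed[OF Fsub])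
lemma Finv: "n \<ge> 1 \<Longrightarrow> x \<in> F n \<Longrightarrow> inv x \<in> F n"
  by (rule subgroup.m_inv_closed[OF Fsub])
lemma Fone: "n \<ge> 1 \<Longrightarrow> \<one> \<in> F n"
  by (rule subgroup.one_closed[OF Fsub])

lemma conjF: "N \<ge> 1 \<Longrightarrow> g \<in> carrier G \<Longrightarrow> a \<in> F N \<Longrightarrow> g \<otimes> a \<otimes> inv g \<in> F N"
proof -
  assume a: "N \<ge> 1" "g \<in> carrier G" "a \<in> F N"
  have "gcomm G g a \<in> F (1 + N)" using Fcomm[of 1 N g a] a F1 by simp
  hence "gcomm G g a \<in> F N" using Fdec[of N] a by auto
  hence "gcomm G g a \<otimes> a \<in> F N" using Fin a by blast
  moreover have "gcomm G g a \<otimes> a = g \<otimes> a \<otimes> inv g" using a Fcar[of N a]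
    by (simp add: gs)
  ultimately show ?thesis by metis
qed

lemma normF: "N \<ge> 1 \<Longrightarrow> F N \<lhd> G"
  by (simp add: normal_inv_iff Fsub conjF)

definition eqv :: "nat \<Rightarrow> 'a \<Rightarrow> 'a \<Rightarrow> bool" where
  "eqv k a b \<longleftrightarrow> a \<in> carrier G \<and> b \<in> carrier G \<and> a \<otimes> inv b \<in> F k"

lemma eqv_refl: "k \<ge> 1 \<Longrightarrow> a \<in> carrier G \<Longrightarrow> eqv k a a"
  unfolding eqv_def using Fone by simp

lemma eqv_sym: "k \<ge> 1 \<Longrightarrow> eqv k a b \<Longrightarrow> eqv k b a"
  unfolding eqv_def using Finv[of k "a \<otimes> inv b"] by (simp add: gs)

lemma eqv_trans: "k \<ge> 1 \<Longrightarrow> eqv k a b \<Longrightarrow> eqv k b c \<Longrightarrow> eqv k a c"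
  unfolding eqv_def using Fin[of k "a \<otimes> inv b" "b \<otimes> inv c"] by (simp add: gs)

lemma eqv_mult: "k \<ge> 1 \<Longrightarrow> eqv k a b \<Longrightarrow> eqv k c d \<Longrightarrow> eqv k (a \<otimes> c) (b \<otimes> d)"
proof -
  assume k: "k \<ge> 1" and e: "eqv k a b" "eqv k c d"
  have "a \<otimes> (c \<otimes> inv d) \<otimes> inv a \<in> F k" using e k conjF unfolding eqv_def by blast
  hence "a \<otimes> (c \<otimes> inv d) \<otimes> inv a \<otimes> (a \<otimes> inv b) \<in> F k" using Fin k e unfolding eqv_def by blast
  moreover have "a \<otimes> (c \<otimes> inv d) \<otimes> inv a \<otimes> (a \<otimes> inv b) = (a \<otimes> c) \<otimes> inv (b \<otimes> d)"
    using e unfolding eqv_def by (simp add: gs)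
  ultimately show ?thesis using e unfolding eqv_def by simp
qed

lemma eqv_mono: "1 \<le> k \<Longrightarrow> k \<le> l \<Longrightarrow> eqv l a b \<Longrightarrow> eqv k a b"
  unfolding eqv_def using Fmono by blast

lemma eqv_oneI: "k \<ge> 1 \<Longrightarrow> a \<in> F k \<Longrightarrow> eqv k a \<one>"
  unfolding eqv_def using Fcar by simp

lemma eqv_in: "k \<ge> 1 \<Longrightarrow> eqv k a b \<Longrightarrow> b \<in> F k \<Longrightarrow> a \<in> F k"
proof -
  assume a: "k \<ge> 1" "eqv k a b" "b \<in> F k"
  hence "a \<otimes> inv b \<otimes> b \<in> F k" using Fin unfolding eqv_def by blast
  thus ?thesis using a unfolding eqv_def by (simp add: gs)
qed

lemma eqv_conj: "N \<ge> 1 \<Longrightarrow> g \<in> carrier G \<Longrightarrow> a \<in> F N \<Longrightarrow> eqv (Suc N) (g \<otimes> a \<otimes> inv g) a"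
proof -
  assume a: "N \<ge> 1" "g \<in> carrier G" "a \<in> F N"
  have "gcomm G g a \<in> F (1 + N)" using Fcomm[of 1 N g a] a F1 by simp
  moreover have "gcomm G g a = g \<otimes> a \<otimes> inv g \<otimes> inv a" by (simp add: gcomm_def)
  ultimately show ?thesis using a Fcar[of N a] unfolding eqv_def by simp
qed

lemma wd_R:
  assumes n: "n \<ge> 1" and x: "x \<in> F n" and e: "eqv (Suc n) x' x"
  shows "eqv (Suc n) (R x') (R x)"
proof -
  have xc: "x \<in> carrier G" using Fcar n x by blast
  have x'c: "x' \<in> carrier G" using e unfolding eqv_def by blast
  define a where "a = x' \<otimes> inv x"
  have a: "a \<in> F (Suc n)" using e unfolding eqv_def a_def by blast
  have ac: "a \<in> carrier G" using Fcar[of "Suc n"] a by simp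
  define h where "h = inv x \<otimes> a \<otimes> inv (inv x)"
  have h: "h \<in> F (Suc n)" unfolding h_def using conjF[of "Suc n" "inv x" a] a xc by simp
  define h' where "h' = inv (R x) \<otimes> h \<otimes> inv (inv (R x))"
  have h': "h' \<in> F (Suc n)" unfolding h'_def using conjF[of "Suc n" "inv (R x)" h] h xc Rcar by simp
  have h'c: "h' \<in> carrier G" using Fcar[of "Suc n"] h' by simp
  have "x \<otimes> R x \<otimes> h' \<otimes> inv (R x) = x'" unfolding h'_def h_def a_def using xc x'c by (simp add: gs)
  hence eq: "R x \<otimes> R h' = R x'" using RB[of x h'] xc h'c by simp
  have "R x \<otimes> R h' \<otimes> inv (R x) \<in> F (Suc n)"
    using conjF[of "Suc n" "R x" "R h'"] Rclosed[of "Suc n" h'] h' xc Rcar by simp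
  hence "R x' \<otimes> inv (R x) \<in> F (Suc n)" using eq by metis
  thus ?thesis unfolding eqv_def using Rcar xc x'c by simp
qed

lemma wd_l:
  assumes n: "n \<ge> 1" and m: "m \<ge> 1" and x: "x \<in> F n" and y: "y \<in> F m" and a: "a \<in> F (Suc n)"
  shows "eqv (Suc (n+m)) (gcomm G (a \<otimes> x) y) (gcomm G x y)"
proof -
  have xc: "x \<in> carrier G" using Fcar n x by blast
  have yc: "y \<in> carrier G" using Fcar m y by blast
  have ac: "a \<in> carrier G" using Fcar[of "Suc n"] a by simp
  have c: "gcomm G x y \<in> F (n+m)" using Fcomm n m x y by blast
  have cc: "gcomm G x y \<in> carrier G" using Fcar[of "n+m"] c n by simp
  have ay: "gcomm G a y \<in> F (Suc (n + m))" using Fcomm[of "Suc n" m a y] a y m by simp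
  have e1: "eqv (Suc (n+m)) (a \<otimes> gcomm G x y \<otimes> inv a) (gcomm G x y)"
    using eqv_conj[of "n+m" a "gcomm G x y"] n c ac by simp
  have e2: "eqv (Suc (n+m)) (gcomm G a y) \<one>" using eqv_oneI ay by simp
  have e3: "eqv (Suc(n+m)) (a \<otimes> gcomm G x y \<otimes> inv a \<otimes> gcomm G a y) (gcomm G x y \<otimes> \<one>)"
    using eqv_mult[OF _ e1 e2] by simp
  have "a \<otimes> gcomm G x y \<otimes> inv a \<otimes> gcomm G a y = gcomm G (a \<otimes> x) y" using xc yc ac by (simp add: gs)
  moreover have "gcomm G x y \<otimes> \<one> = gcomm G x y" using cc by simp
  ultimately show ?thesis using e3 by metis
qed

lemma wd_r:
  assumes n: "n \<ge> 1" and m: "m \<ge> 1" and x: "x \<in> F n" and y: "y \<in> F m" and b: "b \<in> F (Suc m)"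
  shows "eqv (Suc (n+m)) (gcomm G x (b \<otimes> y)) (gcomm G x y)"
proof -
  have xc: "x \<in> carrier G" using Fcar n x by blast
  have yc: "y \<in> carrier G" using Fcar m y by blast
  have bc: "b \<in> carrier G" using Fcar[of "Suc m"] b by simp
  have c: "gcomm G x y \<in> F (n+m)" using Fcomm n m x y by blast
  have cc: "gcomm G x y \<in> carrier G" using Fcar[of "n+m"] c n by simp
  have xb: "gcomm G x b \<in> F (Suc (n + m))" using Fcomm[of n "Suc m" x b] b x n by simp
  have e1: "eqv (Suc (n+m)) (b \<otimes> gcomm G x y \<otimes> inv b) (gcomm G x y)"
    using eqv_conj[of "n+m" b "gcomm G x y"] n c bc by simp
  have e2: "eqv (Suc (n+m)) (gcomm G x b) \<one>" using eqv_oneI xb by simp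
  have e3: "eqv (Suc(n+m)) (gcomm G x b \<otimes> (b \<otimes> gcomm G x y \<otimes> inv b)) (\<one> \<otimes> gcomm G x y)"
    using eqv_mult[OF _ e2 e1] by simp
  have "gcomm G x b \<otimes> (b \<otimes> gcomm G x y \<otimes> inv b) = gcomm G x (b \<otimes> y)" using xc yc bc by (simp add: gs)
  moreover have "\<one> \<otimes> gcomm G x y = gcomm G x y" using cc by simp
  ultimately show ?thesis using e3 by metis
qed

lemma wd_comm:
  assumes n: "n \<ge> 1" and m: "m \<ge> 1" and x: "x \<in> F n" and y: "y \<in> F m"
    and ex: "eqv (Suc n) x' x" and ey: "eqv (Suc m) y' y"
  shows "eqv (Suc (n+m)) (gcomm G x' y') (gcomm G x y)"
proof -
  have xc: "x \<in> carrier G" using Fcar n x by blast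
  have yc: "y \<in> carrier G" using Fcar m y by blast
  have x'c: "x' \<in> carrier G" using ex unfolding eqv_def by blast
  have y'c: "y' \<in> carrier G" using ey unfolding eqv_def by blast
  define a where "a = x' \<otimes> inv x"
  have a: "a \<in> F (Suc n)" using ex unfolding eqv_def a_def by blast
  have xa: "x' = a \<otimes> x" unfolding a_def using xc x'c by (simp add: m_assoc)
  define b where "b = y' \<otimes> inv y"
  have b: "b \<in> F (Suc m)" using ey unfolding eqv_def b_def by blast
  have yb: "y' = b \<otimes> y" unfolding b_def using yc y'c by (simp add: m_assoc)
  have x': "x' \<in> F n" using eqv_in[of n x' x] eqv_mono[of n "Suc n" x' x] ex x n by simp
  have e1: "eqv (Suc (n+m)) (gcomm G x' (b \<otimes> y)) (gcomm G x' y)" using wd_r n m x' y b by blast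
  have e2: "eqv (Suc (n+m)) (gcomm G (a \<otimes> x) y) (gcomm G x y)" using wd_l n m x y a by blast
  show ?thesis using eqv_trans[OF _ e1] e2 xa yb by simp
qed

definition cl :: "nat \<Rightarrow> 'a \<Rightarrow> 'a set" where "cl k x = F (Suc k) #> x"

lemma in_cl: "k \<ge> 1 \<Longrightarrow> x \<in> carrier G \<Longrightarrow> y \<in> carrier G \<Longrightarrow> y \<in> cl k x \<longleftrightarrow> eqv (Suc k) y x"
  unfolding cl_def eqv_def using subgroup.rcos_module[OF Fsub[of "Suc k"] grpG] by simp

lemma cl_self: "k \<ge> 1 \<Longrightarrow> x \<in> carrier G \<Longrightarrow> x \<in> cl k x"
  unfolding cl_def using rcos_self Fsub[of "Suc k"] by simp

lemma cl_eq: "k \<ge> 1 \<Longrightarrow> x \<in> carrier G \<Longrightarrow> y \<in> carrier G \<Longrightarrow> cl k x = cl k y \<longleftrightarrow> eqv (Suc k) x y"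
proof
  assume a: "k \<ge> 1" "x \<in> carrier G" "y \<in> carrier G" "cl k x = cl k y"
  then show "eqv (Suc k) x y" using cl_self in_cl by metis
next
  assume a: "k \<ge> 1" "x \<in> carrier G" "y \<in> carrier G" "eqv (Suc k) x y"
  hence "x \<in> cl k y" using in_cl by blast
  thus "cl k x = cl k y" unfolding cl_def using repr_independence[of x "F (Suc k)" y] a Fsub[of "Suc k"] by simp
qed

lemma carrier_grp: "carrier (grp G F k) = cl k ` F k"
  unfolding grp_def carrier_FactGroup cl_def by (simp add: r_coset_def)

lemma mult_grp: "A \<otimes>\<^bsub>grp G F k\<^esub> B = A <#> B"
  unfolding grp_def mult_FactGroup by (simp add: set_mult_def)

lemma one_grp: "\<one>\<^bsub>grp G F k\<^esub> = F (Suc k)"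
  by (simp add: grp_def)

lemma cl_mult: "k \<ge> 1 \<Longrightarrow> x \<in> carrier G \<Longrightarrow> y \<in> carrier G \<Longrightarrow> cl k x \<otimes>\<^bsub>grp G F k\<^esub> cl k y = cl k (x \<otimes> y)"
  unfolding mult_grp cl_def using normal.rcos_sum[OF normF[of "Suc k"]] by simp

lemma cl_one: "k \<ge> 1 \<Longrightarrow> cl k \<one> = F (Suc k)"
  unfolding cl_def using coset_mult_one[OF Fsubset[of "Suc k"]] by simp

lemma some_cl:
  assumes k: "k \<ge> 1" and x: "x \<in> F k"
  shows "(SOME y. y \<in> cl k x) \<in> F k \<and> eqv (Suc k) (SOME y. y \<in> cl k x) x"
proof -
  have xc: "x \<in> carrier G" using Fcar k x by blast
  have "x \<in> cl k x" using cl_self k xc by blast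
  hence s: "(SOME y. y \<in> cl k x) \<in> cl k x" by (rule someI)
  have "cl k x \<subseteq> carrier G" unfolding cl_def using r_coset_subset_G[OF Fsubset[of "Suc k"] xc] by simp
  hence "(SOME y. y \<in> cl k x) \<in> carrier G" using s by blast
  hence e: "eqv (Suc k) (SOME y. y \<in> cl k x) x" using in_cl k xc s by blast
  moreover have "eqv k (SOME y. y \<in> cl k x) x" using eqv_mono[of k "Suc k"] e k by simp
  hence "(SOME y. y \<in> cl k x) \<in> F k" using eqv_in[OF k _ x] by blast
  ultimately show ?thesis by blast
qed

lemma grR_cl: "k \<ge> 1 \<Longrightarrow> x \<in> F k \<Longrightarrow> grR G F R k (cl k x) = cl k (R x)"
proof -
  assume k: "k \<ge> 1" and x: "x \<in> F k"
  define s where "s = (SOME y. y \<in> cl k x)"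
  have s: "s \<in> F k" "eqv (Suc k) s x" using some_cl k x unfolding s_def by auto
  have "grR G F R k (cl k x) = cl k (R s)" unfolding grR_def cl_def s_def by simp
  also have "\<dots> = cl k (R x)" using cl_eq[of k "R s" "R x"] wd_R[OF k x s(2)] Rcar Fcar k x s
    unfolding eqv_def by blast
  finally show ?thesis .
qed

lemma grbr_cl:
  assumes n: "n \<ge> 1" and m: "m \<ge> 1" and x: "x \<in> F n" and y: "y \<in> F m"
  shows "grbr G F n m (cl n x) (cl m y) = cl (n+m) (gcomm G x y)"
proof -
  define s where "s = (SOME y. y \<in> cl n x)"
  define t where "t = (SOME z. z \<in> cl m y)"
  have s: "s \<in> F n" "eqv (Suc n) s x" using some_cl n x unfolding s_def by auto
  have t: "t \<in> F m" "eqv (Suc m) t y" using some_cl m y unfolding t_def by auto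
  have "grbr G F n m (cl n x) (cl m y) = cl (n+m) (gcomm G s t)" unfolding grbr_def cl_def s_def t_def by simp
  also have "\<dots> = cl (n+m) (gcomm G x y)"
    using cl_eq[of "n+m" "gcomm G s t" "gcomm G x y"] wd_comm[OF n m x y s(2) t(2)] n unfolding eqv_def by simp
  finally show ?thesis .
qed

lemma grp_group: "k \<ge> 1 \<Longrightarrow> group (grp G F k)"
proof -
  assume k: "k \<ge> 1"
  have "F (Suc k) \<lhd> (G\<lparr>carrier := F k\<rparr>)"
    using normal_restrict_supergroup[OF Fsub[of k] normF[of "Suc k"]] Fdec[of k] k by simp
  thus ?thesis unfolding grp_def using normal.factorgroup_is_group by blast
qed

lemma grp_comm_group: "k \<ge> 1 \<Longrightarrow> comm_group (grp G F k)"
proof -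
  assume k: "k \<ge> 1"
  show ?thesis
  proof (rule group.group_comm_groupI[OF grp_group[OF k]])
    fix A B assume "A \<in> carrier (grp G F k)" "B \<in> carrier (grp G F k)"
    then obtain x y where x: "x \<in> F k" "A = cl k x" and y: "y \<in> F k" "B = cl k y"
      using carrier_grp by auto
    have xc: "x \<in> carrier G" using Fcar k x by blast
    have yc: "y \<in> carrier G" using Fcar k y by blast
    have "gcomm G x y \<in> F (k + k)" using Fcomm k x y by blast
    hence "gcomm G x y \<in> F (Suc k)" using Fmono[of "Suc k" "k+k"] k by auto
    moreover have "gcomm G x y = (x \<otimes> y) \<otimes> inv (y \<otimes> x)" using xc yc by (simp add: gs)
    ultimately have "eqv (Suc k) (x \<otimes> y) (y \<otimes> x)" unfolding eqv_def using xc yc by simp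
    hence "cl k (x \<otimes> y) = cl k (y \<otimes> x)" using cl_eq k xc yc by simp
    thus "A \<otimes>\<^bsub>grp G F k\<^esub> B = B \<otimes>\<^bsub>grp G F k\<^esub> A" using x y cl_mult k xc yc by simp
  qed
qed

lemma grR_hom: "k \<ge> 1 \<Longrightarrow> grR G F R k \<in> hom (grp G F k) (grp G F k)"
proof -
  assume k: "k \<ge> 1"
  show ?thesis
  proof (rule homI)
    fix A assume "A \<in> carrier (grp G F k)"
    then obtain x where x: "x \<in> F k" "A = cl k x" using carrier_grp by auto
    show "grR G F R k A \<in> carrier (grp G F k)" using x grR_cl k Rclosed carrier_grp by auto
  next
    fix A B assume "A \<in> carrier (grp G F k)" "B \<in> carrier (grp G F k)"
    then obtain x y where x: "x \<in> F k" "A = cl k x" and y: "y \<in> F k" "B = cl k y"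
      using carrier_grp by auto
    have xc: "x \<in> carrier G" using Fcar k x by blast
    have yc: "y \<in> carrier G" using Fcar k y by blast
    have xy: "x \<otimes> y \<in> F k" using Fin k x y by blast
    have e1: "eqv (Suc k) (R x \<otimes> y \<otimes> inv (R x)) y" using eqv_conj[of k "R x" y] k xc y Rcar by blast
    have e2: "eqv (Suc k) (x \<otimes> (R x \<otimes> y \<otimes> inv (R x))) (x \<otimes> y)"
      using eqv_mult[OF _ eqv_refl[of _ x] e1] xc by simp
    have "x \<otimes> (R x \<otimes> y \<otimes> inv (R x)) = x \<otimes> R x \<otimes> y \<otimes> inv (R x)" using xc yc Rcar by (simp add: m_assoc)
    hence e3: "eqv (Suc k) (x \<otimes> R x \<otimes> y \<otimes> inv (R x)) (x \<otimes> y)" using e2 by metis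
    have e4: "eqv (Suc k) (R (x \<otimes> R x \<otimes> y \<otimes> inv (R x))) (R (x \<otimes> y))" using wd_R[OF k xy e3] .
    have "grR G F R k (A \<otimes>\<^bsub>grp G F k\<^esub> B) = cl k (R (x \<otimes> y))" using x y cl_mult k xc yc grR_cl xy by simp
    also have "\<dots> = cl k (R (x \<otimes> R x \<otimes> y \<otimes> inv (R x)))"
      using cl_eq[OF k] e4 eqv_sym[OF _ e4] k unfolding eqv_def by blast
    also have "\<dots> = cl k (R x \<otimes> R y)" using RB xc yc by simp
    also have "\<dots> = grR G F R k A \<otimes>\<^bsub>grp G F k\<^esub> grR G F R k B"
      using x y grR_cl k cl_mult Rcar xc yc by simp
    finally show "grR G F R k (A \<otimes>\<^bsub>grp G F k\<^esub> B) = grR G F R k A \<otimes>\<^bsub>grp G F k\<^esub> grR G F R k B" .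
  qed
qed

lemma qact_grR:
  assumes k: "k \<ge> 1" and ud: "gr_uniquely_divisible G F" and A: "A \<in> carrier (grp G F k)"
  shows "grR G F R k (qact G F k q A) = qact G F k q (grR G F R k A)"
proof -
  let ?H = "grp G F k"
  have gH: "group ?H" using grp_group k .
  have hom: "grR G F R k \<in> hom ?H ?H" using grR_hom k .
  define p where "p = fst (quotient_of q)"
  define d where "d = snd (quotient_of q)"
  have d: "d > 0" unfolding d_def by (rule quotient_of_denom_pos')
  have dn: "d = int (nat d)" using d by simp
  have eqp: "\<And>B. B [^]\<^bsub>?H\<^esub> d = B [^]\<^bsub>?H\<^esub> (nat d)" by (metis dn int_pow_int)
  have ex: "\<exists>!B. B \<in> carrier ?H \<and> B [^]\<^bsub>?H\<^esub> d = C [^]\<^bsub>?H\<^esub> p" if C: "C \<in> carrier ?H" for C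
  proof -
    have Cp: "C [^]\<^bsub>?H\<^esub> p \<in> carrier ?H" using C group.int_pow_closed[OF gH] by blast
    have all: "\<forall>n\<ge>1. \<forall>A\<in>carrier (grp G F n). \<forall>j::nat. j > 0 \<longrightarrow>
     (\<exists>!B. B \<in> carrier (grp G F n) \<and> B [^]\<^bsub>grp G F n\<^esub> j = A)"
      using ud unfolding gr_uniquely_divisible_def .
    have dpos: "0 < nat d" using d by simp
    have "\<exists>!B. B \<in> carrier ?H \<and> B [^]\<^bsub>?H\<^esub> (nat d) = C [^]\<^bsub>?H\<^esub> p"
      by (rule all[rule_format, OF k Cp dpos])
    then show ?thesis by (simp only: eqp)
  qed
  have q_eq: "qact G F k q C = (THE B. B \<in> carrier ?H \<and> B [^]\<^bsub>?H\<^esub> d = C [^]\<^bsub>?H\<^esub> p)" for C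
    unfolding qact_def p_def d_def by simp
  define B where "B = qact G F k q A"
  have B: "B \<in> carrier ?H \<and> B [^]\<^bsub>?H\<^esub> d = A [^]\<^bsub>?H\<^esub> p"
    unfolding B_def q_eq by (rule theI'[OF ex[OF A]])
  have RA: "grR G F R k A \<in> carrier ?H" using hom A unfolding hom_def by blast
  have RB': "grR G F R k B \<in> carrier ?H" using hom B unfolding hom_def by blast
  have h1: "grR G F R k (B [^]\<^bsub>?H\<^esub> d) = grR G F R k B [^]\<^bsub>?H\<^esub> d"
    by (rule hom_int_pow[OF hom conjunct1[OF B] gH gH])
  have h2: "grR G F R k (A [^]\<^bsub>?H\<^esub> p) = grR G F R k A [^]\<^bsub>?H\<^esub> p"
    by (rule hom_int_pow[OF hom A gH gH])
  have "grR G F R k B [^]\<^bsub>?H\<^esub> d = grR G F R k A [^]\<^bsub>?H\<^esub> p"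
    using h1 h2 conjunct2[OF B] by metis
  hence "qact G F k q (grR G F R k A) = grR G F R k B"
    unfolding q_eq using the1_equality[OF ex[OF RA]] RB' by blast
  thus ?thesis unfolding B_def by simp
qed

lemma R1: "R \<one> = \<one>"
proof -
  have a: "R \<one> \<otimes> R \<one> = R (\<one> \<otimes> R \<one> \<otimes> \<one> \<otimes> inv (R \<one>))" using RB[of \<one> \<one>] by simp
  have b: "\<one> \<otimes> R \<one> \<otimes> \<one> \<otimes> inv (R \<one>) = \<one>" using Rcar[of \<one>] by simp
  have c: "R \<one> \<otimes> R \<one> = R \<one>" using a b by metis
  have "inv (R \<one>) \<otimes> (R \<one> \<otimes> R \<one>) = inv (R \<one>) \<otimes> R \<one>" using c by simp
  thus ?thesis using Rcar[of \<one>] by (simp add: c2)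
qed

lemma rb_key:
  assumes n: "n \<ge> 1" and m: "m \<ge> 1" and x: "x \<in> F n" and y: "y \<in> F m"
  shows "\<exists>z. gcomm G (R x) (R y) = R z \<and> z \<in> F (n+m) \<and>
     eqv (Suc (n+m)) z (gcomm G (R x) y \<otimes> gcomm G x (R y) \<otimes> gcomm G x y)"
proof -
  have xc: "x \<in> carrier G" using Fcar n x by blast
  have yc: "y \<in> carrier G" using Fcar m y by blast
  have Rx: "R x \<in> F n" using Rclosed n x by blast
  have Ry: "R y \<in> F m" using Rclosed m y by blast
  have Rxc: "R x \<in> carrier G" using Rcar xc by blast
  have Ryc: "R y \<in> carrier G" using Rcar yc by blast
  have nm: "n + m \<ge> 1" using n by simp
  define u where "u = x \<otimes> R x \<otimes> y \<otimes> inv (R x)"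
  define v where "v = y \<otimes> R y \<otimes> x \<otimes> inv (R y)"
  have uc: "u \<in> carrier G" unfolding u_def using xc yc Rxc by simp
  have vc: "v \<in> carrier G" unfolding v_def using xc yc Ryc by simp
  have Ru: "R x \<otimes> R y = R u" unfolding u_def by (rule RB[OF xc yc])
  have Rv: "R y \<otimes> R x = R v" unfolding v_def by (rule RB[OF yc xc])
  have Ruc: "R u \<in> carrier G" using Rcar uc by blast
  have Rvc: "R v \<in> carrier G" using Rcar vc by blast
  define w where "w = inv (R v) \<otimes> inv v \<otimes> R v"
  have wc: "w \<in> carrier G" unfolding w_def using vc Rvc by simp
  have Rwc: "R w \<in> carrier G" using Rcar wc by blast
  have w1: "R v \<otimes> R w = R (v \<otimes> R v \<otimes> w \<otimes> inv (R v))" by (rule RB[OF vc wc])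
  have w2: "v \<otimes> R v \<otimes> w \<otimes> inv (R v) = \<one>" unfolding w_def using vc Rvc by (simp add: gs)
  have w3: "R v \<otimes> R w = \<one>" using w1 w2 R1 by metis
  have "inv (R v) \<otimes> (R v \<otimes> R w) = inv (R v) \<otimes> \<one>" using w3 by simp
  hence Rw: "R w = inv (R v)" using Rvc Rwc by (simp add: c2)
  define t where "t = gcomm G (R x) (R y)"
  have t: "t \<in> F (n+m)" unfolding t_def using Fcomm n m Rx Ry by blast
  have tc: "t \<in> carrier G" using Fcar nm t by blast
  have t1: "R u \<otimes> inv (R v) = (R x \<otimes> R y) \<otimes> inv (R y \<otimes> R x)" using Ru Rv by simp
  have t2: "(R x \<otimes> R y) \<otimes> inv (R y \<otimes> R x) = t" unfolding t_def using Rxc Ryc by (simp add: gs)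
  have t_eq: "t = R u \<otimes> inv (R v)" using t1 t2 by simp
  define z where "z = u \<otimes> R u \<otimes> w \<otimes> inv (R u)"
  have zc: "z \<in> carrier G" unfolding z_def using uc wc Ruc by simp
  have zR: "t = R z" using t_eq Rw RB[OF uc wc] unfolding z_def by simp
  have z_eq: "z = (u \<otimes> inv v) \<otimes> ((v \<otimes> t \<otimes> inv v) \<otimes> inv t)"
    unfolding z_def w_def t_eq using uc vc Ruc Rvc by (simp add: gs)
  define c1 where "c1 = gcomm G (R x) y"
  define c2' where "c2' = gcomm G x (R y)"
  define c3 where "c3 = gcomm G x y"
  have c1F: "c1 \<in> F (n+m)" unfolding c1_def using Fcomm n m Rx y by blast
  have c2F: "c2' \<in> F (n+m)" unfolding c2'_def using Fcomm n m x Ry by blast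
  have c3F: "c3 \<in> F (n+m)" unfolding c3_def using Fcomm n m x y by blast
  have c3c: "c3 \<in> carrier G" using Fcar nm c3F by blast
  define g where "g = x \<otimes> y \<otimes> inv x"
  have gc: "g \<in> carrier G" unfolding g_def using xc yc by simp
  have uv: "u \<otimes> inv v = (x \<otimes> c1 \<otimes> inv x) \<otimes> (g \<otimes> c2' \<otimes> inv g) \<otimes> c3"
    unfolding u_def v_def g_def c1_def c2'_def c3_def using xc yc Rxc Ryc by (simp add: gs)
  have e1: "eqv (Suc (n+m)) (x \<otimes> c1 \<otimes> inv x) c1" using eqv_conj[OF nm xc c1F] .
  have e2: "eqv (Suc (n+m)) (g \<otimes> c2' \<otimes> inv g) c2'" using eqv_conj[OF nm gc c2F] .
  have e3: "eqv (Suc (n+m)) c3 c3" using eqv_refl c3c by simp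
  have e12: "eqv (Suc (n+m)) ((x \<otimes> c1 \<otimes> inv x) \<otimes> (g \<otimes> c2' \<otimes> inv g)) (c1 \<otimes> c2')"
    using eqv_mult[OF _ e1 e2] by simp
  have e123: "eqv (Suc (n+m)) ((x \<otimes> c1 \<otimes> inv x) \<otimes> (g \<otimes> c2' \<otimes> inv g) \<otimes> c3) (c1 \<otimes> c2' \<otimes> c3)"
    using eqv_mult[OF _ e12 e3] by simp
  have euv: "eqv (Suc (n+m)) (u \<otimes> inv v) (c1 \<otimes> c2' \<otimes> c3)" using e123 uv by simp
  have et1: "eqv (Suc (n+m)) (v \<otimes> t \<otimes> inv v) t" using eqv_conj[OF nm vc t] .
  have et2: "eqv (Suc (n+m)) (inv t) (inv t)" using eqv_refl tc by simp
  have et: "eqv (Suc (n+m)) ((v \<otimes> t \<otimes> inv v) \<otimes> inv t) (t \<otimes> inv t)"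
    using eqv_mult[OF _ et1 et2] by simp
  have et': "eqv (Suc (n+m)) ((v \<otimes> t \<otimes> inv v) \<otimes> inv t) \<one>" using et tc by simp
  have ez0: "eqv (Suc (n+m)) ((u \<otimes> inv v) \<otimes> ((v \<otimes> t \<otimes> inv v) \<otimes> inv t)) ((c1 \<otimes> c2' \<otimes> c3) \<otimes> \<one>)"
    using eqv_mult[OF _ euv et'] by simp
  have c123c: "c1 \<otimes> c2' \<otimes> c3 \<in> carrier G" using euv unfolding eqv_def by blast
  have ez: "eqv (Suc (n+m)) z (c1 \<otimes> c2' \<otimes> c3)" using ez0 z_eq c123c by simp
  have c123F: "c1 \<otimes> c2' \<otimes> c3 \<in> F (n+m)" using Fin[OF nm Fin[OF nm c1F c2F] c3F] .
  have zF: "z \<in> F (n+m)" using eqv_in[OF nm _ c123F] eqv_mono[of "n+m" "Suc (n+m)"] ez nm by simp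
  show ?thesis unfolding c1_def[symmetric] c2'_def[symmetric] c3_def[symmetric] t_def[symmetric]
    using zR zF ez by blast
qed

lemma grbr_closed:
  assumes n: "n \<ge> 1" and m: "m \<ge> 1" and A: "A \<in> carrier (grp G F n)" and B: "B \<in> carrier (grp G F m)"
  shows "grbr G F n m A B \<in> carrier (grp G F (n+m))"
proof -
  obtain x where x: "x \<in> F n" "A = cl n x" using A carrier_grp by auto
  obtain y where y: "y \<in> F m" "B = cl m y" using B carrier_grp by auto
  have "gcomm G x y \<in> F (n+m)" using Fcomm n m x y by blast
  thus ?thesis using x y grbr_cl[OF n m x(1) y(1)] carrier_grp by simp
qed

lemma grR_closed: "k \<ge> 1 \<Longrightarrow> A \<in> carrier (grp G F k) \<Longrightarrow> grR G F R k A \<in> carrier (grp G F k)"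
  using grR_hom unfolding hom_def by blast

lemma rb_cl:
  assumes n: "n \<ge> 1" and m: "m \<ge> 1" and A: "A \<in> carrier (grp G F n)" and B: "B \<in> carrier (grp G F m)"
  shows "grbr G F n m (grR G F R n A) (grR G F R m B) = grR G F R (n+m)
     (grbr G F n m (grR G F R n A) B \<otimes>\<^bsub>grp G F (n+m)\<^esub> grbr G F n m A (grR G F R m B)
       \<otimes>\<^bsub>grp G F (n+m)\<^esub> grbr G F n m A B)"
proof -
  obtain x where x: "x \<in> F n" "A = cl n x" using A carrier_grp by auto
  obtain y where y: "y \<in> F m" "B = cl m y" using B carrier_grp by auto
  have nm: "n + m \<ge> 1" using n by simp
  have Rx: "R x \<in> F n" using Rclosed n x by blast
  have Ry: "R y \<in> F m" using Rclosed m y by blast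
  obtain z where z: "gcomm G (R x) (R y) = R z" "z \<in> F (n+m)"
     "eqv (Suc (n+m)) z (gcomm G (R x) y \<otimes> gcomm G x (R y) \<otimes> gcomm G x y)"
    using rb_key[OF n m x(1) y(1)] by blast
  have c1F: "gcomm G (R x) y \<in> F (n+m)" using Fcomm n m Rx y(1) by blast
  have c2F: "gcomm G x (R y) \<in> F (n+m)" using Fcomm n m x(1) Ry by blast
  have c3F: "gcomm G x y \<in> F (n+m)" using Fcomm n m x(1) y(1) by blast
  have c1c: "gcomm G (R x) y \<in> carrier G" using Fcar nm c1F by blast
  have c2c: "gcomm G x (R y) \<in> carrier G" using Fcar nm c2F by blast
  have c3c: "gcomm G x y \<in> carrier G" using Fcar nm c3F by blast
  have c123F: "gcomm G (R x) y \<otimes> gcomm G x (R y) \<otimes> gcomm G x y \<in> F (n+m)"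
    using Fin[OF nm Fin[OF nm c1F c2F] c3F] .
  have c123c: "gcomm G (R x) y \<otimes> gcomm G x (R y) \<otimes> gcomm G x y \<in> carrier G" using Fcar nm c123F by blast
  have zc: "z \<in> carrier G" using Fcar nm z(2) by blast
  have RA: "grR G F R n A = cl n (R x)" using grR_cl n x by simp
  have RB': "grR G F R m B = cl m (R y)" using grR_cl m y by simp
  have "grbr G F n m (grR G F R n A) (grR G F R m B) = cl (n+m) (R z)"
    using RA RB' grbr_cl[OF n m Rx Ry] z(1) by simp
  also have "\<dots> = cl (n+m) (R (gcomm G (R x) y \<otimes> gcomm G x (R y) \<otimes> gcomm G x y))"
    using cl_eq[OF nm] wd_R[OF nm c123F z(3)] unfolding eqv_def by blast
  also have "\<dots> = grR G F R (n+m) (cl (n+m) (gcomm G (R x) y \<otimes> gcomm G x (R y) \<otimes> gcomm G x y))"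
    using grR_cl[OF nm c123F] by simp
  also have "cl (n+m) (gcomm G (R x) y \<otimes> gcomm G x (R y) \<otimes> gcomm G x y)
     = grbr G F n m (grR G F R n A) B \<otimes>\<^bsub>grp G F (n+m)\<^esub> grbr G F n m A (grR G F R m B)
       \<otimes>\<^bsub>grp G F (n+m)\<^esub> grbr G F n m A B"
    using RA RB' x y grbr_cl[OF n m Rx y(1)] grbr_cl[OF n m x(1) Ry] grbr_cl[OF n m x(1) y(1)]
      cl_mult[OF nm] c1c c2c c3c by simp
  finally show ?thesis .
qed

lemma part1:
  assumes f: "f \<in> gr_carrier G F"
  shows "gr_map G F R f \<in> gr_carrier G F"
proof -
  have f0: "f 0 = F 1" and fn: "\<And>n. n \<ge> 1 \<Longrightarrow> f n \<in> carrier (grp G F n)"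
    and ffin: "finite {n. f n \<noteq> \<one>\<^bsub>grp G F n\<^esub>}" using f unfolding gr_carrier_def by auto
  have sub: "{n. gr_map G F R f n \<noteq> \<one>\<^bsub>grp G F n\<^esub>} \<subseteq> {n. f n \<noteq> \<one>\<^bsub>grp G F n\<^esub>}"
  proof
    fix n assume "n \<in> {n. gr_map G F R f n \<noteq> \<one>\<^bsub>grp G F n\<^esub>}"
    hence ne: "gr_map G F R f n \<noteq> \<one>\<^bsub>grp G F n\<^esub>" by simp
    show "n \<in> {n. f n \<noteq> \<one>\<^bsub>grp G F n\<^esub>}"
    proof (cases "n = 0")
      case True thus ?thesis using ne f0 unfolding gr_map_def by simp
    next
      case False hence n: "n \<ge> 1" by simp
      { assume "f n = \<one>\<^bsub>grp G F n\<^esub>"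
        hence "f n = cl n \<one>" using cl_one n one_grp by simp
        hence "gr_map G F R f n = cl n (R \<one>)" unfolding gr_map_def using grR_cl[OF n Fone[OF n]] False by simp
        hence "gr_map G F R f n = \<one>\<^bsub>grp G F n\<^esub>" using R1 cl_one n one_grp by simp
        hence False using ne by simp }
      thus ?thesis by auto
    qed
  qed
  have c: "\<forall>n\<ge>1. gr_map G F R f n \<in> carrier (grp G F n)"
    using grR_closed fn unfolding gr_map_def by simp
  show ?thesis unfolding gr_carrier_def using c finite_subset[OF sub ffin] by (simp add: gr_map_def)
qed

lemma part2:
  assumes f: "f \<in> gr_carrier G F" and g: "g \<in> gr_carrier G F"
  shows "gr_map G F R (gr_add G F f g) = gr_add G F (gr_map G F R f) (gr_map G F R g)"
proof (rule ext)
  fix n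
  show "gr_map G F R (gr_add G F f g) n = gr_add G F (gr_map G F R f) (gr_map G F R g) n"
  proof (cases "n = 0")
    case True thus ?thesis unfolding gr_map_def gr_add_def by simp
  next
    case False hence n: "n \<ge> 1" by simp
    have "f n \<in> carrier (grp G F n)" "g n \<in> carrier (grp G F n)" using f g n unfolding gr_carrier_def by auto
    then show ?thesis unfolding gr_map_def gr_add_def using False hom_mult[OF grR_hom[OF n]] by simp
  qed
qed

lemma part3:
  assumes ud: "gr_uniquely_divisible G F" and f: "f \<in> gr_carrier G F"
  shows "gr_map G F R (gr_smult G F q f) = gr_smult G F q (gr_map G F R f)"
proof (rule ext)
  fix n
  show "gr_map G F R (gr_smult G F q f) n = gr_smult G F q (gr_map G F R f) n"
  proof (cases "n = 0")
    case True thus ?thesis unfolding gr_map_def gr_smult_def by simp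
  next
    case False hence n: "n \<ge> 1" by simp
    have "f n \<in> carrier (grp G F n)" using f n unfolding gr_carrier_def by auto
    then show ?thesis unfolding gr_map_def gr_smult_def using False qact_grR[OF n ud] by simp
  qed
qed

lemma part4:
  assumes f: "f \<in> gr_carrier G F" and g: "g \<in> gr_carrier G F"
  shows "gr_bracket G F (gr_map G F R f) (gr_map G F R g)
          = gr_map G F R (gr_add G F (gr_add G F (gr_bracket G F (gr_map G F R f) g)
                                                  (gr_bracket G F f (gr_map G F R g)))
                                     (gr_bracket G F f g))"
proof (rule ext)
  fix k
  show "gr_bracket G F (gr_map G F R f) (gr_map G F R g) k
          = gr_map G F R (gr_add G F (gr_add G F (gr_bracket G F (gr_map G F R f) g)
                                                  (gr_bracket G F f (gr_map G F R g)))
                                     (gr_bracket G F f g)) k"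
  proof (cases "k = 0")
    case True thus ?thesis by (simp add: gr_bracket_def gr_map_def)
  next
    case False hence k: "k \<ge> 1" by simp
    let ?H = "grp G F k"
    interpret H: comm_group ?H using grp_comm_group[OF k] .
    have fn: "\<And>n. n \<ge> 1 \<Longrightarrow> f n \<in> carrier (grp G F n)" using f unfolding gr_carrier_def by auto
    have gn: "\<And>n. n \<ge> 1 \<Longrightarrow> g n \<in> carrier (grp G F n)" using g unfolding gr_carrier_def by auto
    have Rfn: "\<And>n. n \<ge> 1 \<Longrightarrow> grR G F R n (f n) \<in> carrier (grp G F n)" using grR_closed fn by blast
    have Rgn: "\<And>n. n \<ge> 1 \<Longrightarrow> grR G F R n (g n) \<in> carrier (grp G F n)" using grR_closed gn by blast
    have Mf: "\<And>n. n \<ge> 1 \<Longrightarrow> gr_map G F R f n = grR G F R n (f n)" unfolding gr_map_def by simp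
    have Mg: "\<And>n. n \<ge> 1 \<Longrightarrow> gr_map G F R g n = grR G F R n (g n)" unfolding gr_map_def by simp
    define a where "a = (\<lambda>i. grbr G F i (k-i) (grR G F R i (f i)) (g (k-i)))"
    define b where "b = (\<lambda>i. grbr G F i (k-i) (f i) (grR G F R (k-i) (g (k-i))))"
    define c where "c = (\<lambda>i. grbr G F i (k-i) (f i) (g (k-i)))"
    define l where "l = (\<lambda>i. grbr G F i (k-i) (grR G F R i (f i)) (grR G F R (k-i) (g (k-i))))"
    have ik: "\<And>i. i \<in> {1..<k} \<Longrightarrow> i \<ge> 1 \<and> k - i \<ge> 1 \<and> i + (k - i) = k" by auto
    have brc: "\<And>i A B. i \<in> {1..<k} \<Longrightarrow> A \<in> carrier (grp G F i) \<Longrightarrow> B \<in> carrier (grp G F (k-i))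
        \<Longrightarrow> grbr G F i (k-i) A B \<in> carrier ?H"
    proof -
      fix i A B assume i: "i \<in> {1..<k}" and A: "A \<in> carrier (grp G F i)" and B: "B \<in> carrier (grp G F (k-i))"
      have "grbr G F i (k-i) A B \<in> carrier (grp G F (i + (k-i)))" using grbr_closed A B ik[OF i] by blast
      thus "grbr G F i (k-i) A B \<in> carrier ?H" using ik[OF i] by metis
    qed
    have aP: "a \<in> {1..<k} \<rightarrow> carrier ?H" unfolding a_def using brc Rfn gn ik by auto
    have bP: "b \<in> {1..<k} \<rightarrow> carrier ?H" unfolding b_def using brc fn Rgn ik by auto
    have cP: "c \<in> {1..<k} \<rightarrow> carrier ?H" unfolding c_def using brc fn gn ik by auto
    have lP: "l \<in> {1..<k} \<rightarrow> carrier ?H" unfolding l_def using brc Rfn Rgn ik by auto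
    have abP: "(\<lambda>i. a i \<otimes>\<^bsub>?H\<^esub> b i) \<in> {1..<k} \<rightarrow> carrier ?H" using aP bP by auto
    have abcP: "(\<lambda>i. a i \<otimes>\<^bsub>?H\<^esub> b i \<otimes>\<^bsub>?H\<^esub> c i) \<in> {1..<k} \<rightarrow> carrier ?H" using abP cP by auto
    have pt: "l i = grR G F R k (a i \<otimes>\<^bsub>?H\<^esub> b i \<otimes>\<^bsub>?H\<^esub> c i)" if i: "i \<in> {1..<k}" for i
    proof -
      have "l i = grR G F R (i + (k-i)) (a i \<otimes>\<^bsub>grp G F (i + (k-i))\<^esub> b i \<otimes>\<^bsub>grp G F (i + (k-i))\<^esub> c i)"
        unfolding l_def a_def b_def c_def using rb_cl[of i "k-i" "f i" "g (k-i)"] ik[OF i] fn gn by blast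
      thus ?thesis using ik[OF i] by metis
    qed
    have GB: "\<And>u v. gr_bracket G F u v k = finprod ?H (\<lambda>n. grbr G F n (k - n) (u n) (v (k - n))) {1..<k}"
      unfolding gr_bracket_def using False by (simp only: if_False)
    have L: "gr_bracket G F (gr_map G F R f) (gr_map G F R g) k = finprod ?H l {1..<k}"
      unfolding GB
    proof (rule H.finprod_cong'[OF refl lP])
      fix i assume i: "i \<in> {1..<k}"
      show "grbr G F i (k - i) (gr_map G F R f i) (gr_map G F R g (k - i)) = l i"
        using ik[OF i] Mf Mg unfolding l_def by simp
    qed
    have X: "gr_bracket G F (gr_map G F R f) g k = finprod ?H a {1..<k}"
      unfolding GB
    proof (rule H.finprod_cong'[OF refl aP])
      fix i assume i: "i \<in> {1..<k}"
      show "grbr G F i (k - i) (gr_map G F R f i) (g (k - i)) = a i"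
        using ik[OF i] Mf unfolding a_def by simp
    qed
    have Y: "gr_bracket G F f (gr_map G F R g) k = finprod ?H b {1..<k}"
      unfolding GB
    proof (rule H.finprod_cong'[OF refl bP])
      fix i assume i: "i \<in> {1..<k}"
      show "grbr G F i (k - i) (f i) (gr_map G F R g (k - i)) = b i"
        using ik[OF i] Mg unfolding b_def by simp
    qed
    have Z: "gr_bracket G F f g k = finprod ?H c {1..<k}"
      unfolding GB c_def by (rule refl)
    have MW: "\<And>W. gr_map G F R W k = grR G F R k (W k)" using False by (simp add: gr_map_def)
    have AW: "\<And>U V. gr_add G F U V k = U k \<otimes>\<^bsub>?H\<^esub> V k" using False by (simp add: gr_add_def)
    have "gr_map G F R (gr_add G F (gr_add G F (gr_bracket G F (gr_map G F R f) g)
                                                  (gr_bracket G F f (gr_map G F R g)))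
                                     (gr_bracket G F f g)) k
        = grR G F R k (finprod ?H a {1..<k} \<otimes>\<^bsub>?H\<^esub> finprod ?H b {1..<k} \<otimes>\<^bsub>?H\<^esub> finprod ?H c {1..<k})"
      using X Y Z MW AW by (simp only:)
    also have "finprod ?H a {1..<k} \<otimes>\<^bsub>?H\<^esub> finprod ?H b {1..<k} \<otimes>\<^bsub>?H\<^esub> finprod ?H c {1..<k}
        = finprod ?H (\<lambda>i. a i \<otimes>\<^bsub>?H\<^esub> b i \<otimes>\<^bsub>?H\<^esub> c i) {1..<k}"
      using H.finprod_multf[OF aP bP] H.finprod_multf[OF abP cP] by simp
    also have "grR G F R k (finprod ?H (\<lambda>i. a i \<otimes>\<^bsub>?H\<^esub> b i \<otimes>\<^bsub>?H\<^esub> c i) {1..<k})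
        = finprod ?H (\<lambda>i. grR G F R k (a i \<otimes>\<^bsub>?H\<^esub> b i \<otimes>\<^bsub>?H\<^esub> c i)) {1..<k}"
      by (rule hom_finprod_gen[OF grp_comm_group[OF k] grR_hom[OF k] _ abcP]) simp
    also have "\<dots> = finprod ?H l {1..<k}"
      by (intro H.finprod_cong' refl lP) (simp add: pt)
    finally show ?thesis using L by simp
  qed
qed

end

theorem proposition5p13:
  fixes G :: "('a, 'b) monoid_scheme" and F :: "nat \<Rightarrow> 'a set" and R :: "'a \<Rightarrow> 'a"
  assumes "filtered_rota_baxter_group G F R"
    and "gr_uniquely_divisible G F"
  shows "(\<forall>f\<in>gr_carrier G F. gr_map G F R f \<in> gr_carrier G F)
    \<and> (\<forall>f\<in>gr_carrier G F. \<forall>g\<in>gr_carrier G F.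
          gr_map G F R (gr_add G F f g) = gr_add G F (gr_map G F R f) (gr_map G F R g))
    \<and> (\<forall>q. \<forall>f\<in>gr_carrier G F.
          gr_map G F R (gr_smult G F q f) = gr_smult G F q (gr_map G F R f))
    \<and> (\<forall>f\<in>gr_carrier G F. \<forall>g\<in>gr_carrier G F.
          gr_bracket G F (gr_map G F R f) (gr_map G F R g)
          = gr_map G F R (gr_add G F (gr_add G F (gr_bracket G F (gr_map G F R f) g)
                                                  (gr_bracket G F f (gr_map G F R g)))
                                     (gr_bracket G F f g)))"
proof -
  interpret frb G F R using assms(1) by (simp add: frb_def)
  have p1: "\<forall>f\<in>gr_carrier G F. gr_map G F R f \<in> gr_carrier G F" using part1 by blast
  have p2: "\<forall>f\<in>gr_carrier G F. \<forall>g\<in>gr_carrier G F.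
          gr_map G F R (gr_add G F f g) = gr_add G F (gr_map G F R f) (gr_map G F R g)"
    using part2 by blast
  have p3: "\<forall>q. \<forall>f\<in>gr_carrier G F.
          gr_map G F R (gr_smult G F q f) = gr_smult G F q (gr_map G F R f)"
    using part3[OF assms(2)] by blast
  have p4: "\<forall>f\<in>gr_carrier G F. \<forall>g\<in>gr_carrier G F.
          gr_bracket G F (gr_map G F R f) (gr_map G F R g)
          = gr_map G F R (gr_add G F (gr_add G F (gr_bracket G F (gr_map G F R f) g)
                                                  (gr_bracket G F f (gr_map G F R g)))
                                     (gr_bracket G F f g))"
    using part4 by blast
  show ?thesis by (intro conjI p1 p2 p3 p4)
qed

end
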